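(* Let $n\ge1$. Among the elements of $R$ whose binary representation has length $2n+5$, exactly one has binary representation beginning with $1000$, namely $[1000(10)^n0]_2$; moreover $[1000(10)^n0]_2$ is the smallest element of $R$ whose binary representation has length $2n+5$.
   Context: Stern's sequence $(a(n))_{n\ge0}$: $a(0)=0$, $a(1)=1$, $a(2n)=a(n)$, $a(2n+1)=a(n)+a(n+1)$; $s(n)=a(n+1)$. $R$ is the set of record-setters of $s$, i.e. indices $v\ge0$ with $s(i)<s(v)$ for all $i<v$. Binary representations have no leading zeros. For a binary string $x$, $[x]_2$ is the integer it represents in base 2; $x^i$ denotes $i$-fold concatenation. *)

theory Defs
  imports Main
begin

function stern :: "nat \<Rightarrow> nat" where
  "stern n = (if n = 0 then 0 else if n = 1 then 1
              else if even n then stern (n div 2)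
              else stern (n div 2) + stern (n div 2 + 1))"
  by auto
termination
  by (relation "measure id") (auto elim!: oddE)

declare stern.simps [simp del]

definition s :: "nat \<Rightarrow> nat" where
  "s n = stern (n + 1)"

definition R :: "nat set" where
  "R = {v. \<forall>i<v. s i < s v}"

text \<open>Binary representation without leading zeros, most significant bit first
  (True = 1, False = 0); 0 is represented by the single digit 0.\<close>
fun bin_aux :: "nat \<Rightarrow> bool list" where
  "bin_aux n = (if n = 0 then [] else bin_aux (n div 2) @ [odd n])"

definition binrep :: "nat \<Rightarrow> bool list" where
  "binrep n = (if n = 0 then [False] else bin_aux n)"

definition bin_val :: "bool list \<Rightarrow> nat" where
  "bin_val xs = foldl (\<lambda>acc b. 2 * acc + (if b then 1 else 0)) 0 xs"

definition str_pow :: "'a list \<Rightarrow> nat \<Rightarrow> 'a list" where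
  "str_pow x i = concat (replicate i x)"

end

theory Submission
  imports Defs "HOL-Number_Theory.Fib"
begin

declare bin_aux.simps[simp del]
lemma bin_aux_0[simp]: "bin_aux 0 = []" by (subst bin_aux.simps) simp
lemma bin_aux_1[simp]: "bin_aux (Suc 0) = [True]" by (subst bin_aux.simps) simp

definition stp :: "nat \<times> nat \<Rightarrow> bool \<Rightarrow> nat \<times> nat" where
  "stp st b = (if b then (fst st + snd st, snd st) else (fst st, fst st + snd st))"

definition run :: "bool list \<Rightarrow> nat \<times> nat \<Rightarrow> nat \<times> nat" where
  "run u st = foldl stp st u"

lemma run_Nil[simp]: "run [] st = st" by (simp add: run_def)
lemma run_Cons[simp]: "run (b # u) st = run u (stp st b)" by (simp add: run_def)
lemma run_append: "run (u @ v) st = run v (run u st)" by (simp add: run_def)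
lemma stp_F[simp]: "stp (x,y) False = (x, x+y)" by (simp add: stp_def)
lemma stp_T[simp]: "stp (x,y) True = (x+y, y)" by (simp add: stp_def)

lemma stern_0[simp]: "stern 0 = 0" by (subst stern.simps) simp
lemma stern_1[simp]: "stern (Suc 0) = 1" by (subst stern.simps) simp
lemma stern_even: "stern (2*p) = stern p"
  by (cases "p = 0") (simp, subst stern.simps, auto)
lemma stern_odd: "stern (2*p+1) = stern p + stern (p+1)"
  by (cases "p = 0") (simp, subst stern.simps, auto)

lemma bin_val_gen:
  "foldl (\<lambda>acc b. 2 * acc + (if b then 1 else 0)) a r = a * 2 ^ length r + bin_val r"
proof (induction r arbitrary: a)
  case Nil then show ?case by (simp add: bin_val_def)
next
  case (Cons b r)
  have "bin_val (b # r) = foldl (\<lambda>acc b. 2 * acc + (if b then 1 else 0)) (if b then 1 else 0) r"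
    by (simp add: bin_val_def)
  then show ?case using Cons[of "2*a + (if b then 1 else 0)"] Cons[of "if b then 1 else 0"]
    by (simp add: algebra_simps)
qed

lemma bin_val_Cons: "bin_val (b # r) = (if b then 2 ^ length r else 0) + bin_val r"
  using bin_val_gen[of "if b then 1 else 0" r] by (simp add: bin_val_def)

lemma bin_val_snoc: "bin_val (xs @ [b]) = 2 * bin_val xs + (if b then 1 else 0)"
  by (simp add: bin_val_def)

lemma bin_val_less: "bin_val r < 2 ^ length r"
proof (induction r)
  case Nil then show ?case by (simp add: bin_val_def)
next
  case (Cons b r) then show ?case by (simp only: bin_val_Cons) auto
qed

lemma stern_run: "(stern (bin_val (True # r)), stern (bin_val (True # r) + 1)) = run r (1,1)"
proof (induction r rule: rev_induct)
  case Nil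
  have "stern (Suc (Suc 0)) = 1" using stern_even[of 1] by (simp add: numeral_2_eq_2)
  then show ?case by (simp add: bin_val_def)
next
  case (snoc b r)
  define m where "m = bin_val (True # r)"
  have e: "bin_val (True # r @ [b]) = 2*m + (if b then 1 else 0)"
    using bin_val_snoc[of "True # r" b] by (simp add: m_def)
  have IH: "run r (1,1) = (stern m, stern (m+1))" using snoc by (simp add: m_def)
  show ?case
  proof (cases b)
    case True
    have "2*m+1+1 = 2*(m+1)" by simp
    then show ?thesis using True e IH stern_odd[of m] stern_even[of "m+1"]
      by (simp add: run_append)
  next
    case False
    then show ?thesis using e IH stern_odd[of m] stern_even[of m]
      by (simp add: run_append)
  qed
qed

lemma s_run: "s (bin_val (True # r)) = snd (run r (1,1))"
  using stern_run[of r] unfolding s_def by (metis snd_conv)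

lemma bin_aux_bin_val: "bin_aux (bin_val (True # r)) = True # r"
proof (induction r rule: rev_induct)
  case Nil then show ?case by (simp add: bin_val_def)
next
  case (snoc b r)
  define m where "m = bin_val (True # r)"
  have mpos: "m > 0" unfolding m_def bin_val_Cons by simp
  have e: "bin_val (True # r @ [b]) = 2*m + (if b then 1 else 0)"
    using bin_val_snoc[of "True # r" b] by (simp add: m_def)
  have "bin_aux (2*m + (if b then 1 else 0)) = bin_aux m @ [b]"
    using mpos by (subst bin_aux.simps) auto
  then show ?case using e snoc by (simp add: m_def)
qed

lemma bin_aux_form: "v > 0 \<Longrightarrow> \<exists>r. bin_aux v = True # r \<and> v = bin_val (True # r)"
proof (induction v rule: bin_aux.induct)
  case (1 v)
  show ?case
  proof (cases "v div 2 = 0")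
    case True
    then have "v = 1" using 1(2) by auto
    then show ?thesis by (intro exI[of _ "[]"]) (simp add: bin_val_def)
  next
    case False
    then obtain r where r: "bin_aux (v div 2) = True # r" "v div 2 = bin_val (True # r)"
      using 1 by auto
    have "bin_aux v = bin_aux (v div 2) @ [odd v]" using 1(2) by (subst bin_aux.simps) auto
    moreover have "v = 2 * (v div 2) + (if odd v then 1 else 0)" by presburger
    ultimately show ?thesis using r bin_val_snoc[of "True # r" "odd v"]
      by (intro exI[of _ "r @ [odd v]"]) auto
  qed
qed

lemma binrep_form: "v > 0 \<Longrightarrow> \<exists>r. binrep v = True # r \<and> v = bin_val (True # r)"
  using bin_aux_form by (simp add: binrep_def)

lemma binrep_bin_val: "binrep (bin_val (True # r)) = True # r"
  using bin_aux_bin_val[of r] by (simp add: binrep_def bin_val_Cons)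

lemma run_bound:
  "snd (run u (x,y)) \<le> fib (length u) * min x y + fib (Suc (length u)) * max x y"
proof (induction u arbitrary: x y)
  case Nil then show ?case by simp
next
  case (Cons b u)
  define k where "k = length u"
  have f: "fib (Suc (Suc k)) = fib (Suc k) + fib k" by simp
  have lk: "length (b # u) = Suc k" by (simp add: k_def)
  show ?case
  proof (cases b)
    case False
    have h: "snd (run (b # u) (x,y)) \<le> fib k * x + fib (Suc k) * x + fib (Suc k) * y"
      using Cons[of x "x+y"] False by (simp add: k_def algebra_simps)
    show ?thesis
    proof (cases "x \<le> y")
      case xy: True
      have m: "fib k * x \<le> fib k * y" using xy by simp
      have "fib (Suc (length (b#u))) * max x y = fib (Suc k) * y + fib k * y"
        using xy f lk by (simp add: algebra_simps)
      moreover have "fib (length (b#u)) * min x y = fib (Suc k) * x" using xy lk by simp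
      ultimately show ?thesis using h m by linarith
    next
      case xy: False
      have "fib (Suc (length (b#u))) * max x y = fib (Suc k) * x + fib k * x"
        using xy f lk by (simp add: algebra_simps)
      moreover have "fib (length (b#u)) * min x y = fib (Suc k) * y" using xy lk by simp
      ultimately show ?thesis using h by linarith
    qed
  next
    case True
    have h: "snd (run (b # u) (x,y)) \<le> fib k * y + fib (Suc k) * x + fib (Suc k) * y"
      using Cons[of "x+y" y] True by (simp add: k_def algebra_simps)
    show ?thesis
    proof (cases "x \<le> y")
      case xy: True
      have "fib (Suc (length (b#u))) * max x y = fib (Suc k) * y + fib k * y"
        using xy f lk by (simp add: algebra_simps)
      moreover have "fib (length (b#u)) * min x y = fib (Suc k) * x" using xy lk by simp
      ultimately show ?thesis using h by linarith
    next
      case xy: False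
      have m: "fib k * y \<le> fib k * x" using xy by simp
      have "fib (Suc (length (b#u))) * max x y = fib (Suc k) * x + fib k * x"
        using xy f lk by (simp add: algebra_simps)
      moreover have "fib (length (b#u)) * min x y = fib (Suc k) * y" using xy lk by simp
      ultimately show ?thesis using h m by linarith
    qed
  qed
qed

abbreviation alt :: "nat \<Rightarrow> bool list" where "alt n \<equiv> str_pow [True, False] n"

lemma alt_Suc: "alt (Suc n) = True # False # alt n" by (simp add: str_pow_def)
lemma alt_0: "alt 0 = []" by (simp add: str_pow_def)
lemma alt_len[simp]: "length (alt n) = 2 * n"
  by (induction n) (simp_all add: alt_Suc alt_0)

lemma alt_run:
  "snd (run (alt n) (a,b)) = fib (2*n) * a + fib (2*n+1) * b \<and>
   fst (run (alt n) (a,b)) + fib (2*n) * a = fib (2*n+1) * a + fib (2*n) * b"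
proof (induction n arbitrary: a b)
  case 0 then show ?case by (simp add: alt_0)
next
  case (Suc n)
  have r: "run (alt (Suc n)) (a,b) = run (alt n) (a+b, a+2*b)" by (simp add: alt_Suc mult_2 add.assoc)
  have f1: "fib (2 * Suc n) = fib (2*n+1) + fib (2*n)"
    by (simp add: numeral_2_eq_2)
  have f2: "fib (2 * Suc n + 1) = fib (2*n+1) + fib (2*n+1) + fib (2*n)"
    by (simp add: numeral_2_eq_2)
  show ?case using Suc[of "a+b" "a+2*b"] unfolding r f1 f2 by (simp add: algebra_simps)
qed

definition inv :: "nat \<Rightarrow> nat \<Rightarrow> nat \<Rightarrow> nat \<Rightarrow> bool" where
  "inv x y p q \<longleftrightarrow> x \<le> p \<and> 3*x+2*y \<le> 3*p+2*q \<and>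
     int (3*p+2*q) - int (3*x+2*y) \<le> 2 * (int (8*p+5*q) - int (5*x+7*y))"

lemma inv_step: "inv x y p q \<Longrightarrow> inv (x+y) (x+2*y) (2*p+q) (p+q)"
  unfolding inv_def by simp

lemma key_ineq:
  assumes "inv x y p q" "B \<le> 2 * A"
  shows "A * x + B * (x+y) \<le> A * p + B * (p+q)"
proof (cases "x + y \<le> p + q")
  case True
  have "A * x \<le> A * p" using assms(1) by (simp add: inv_def)
  moreover have "B * (x+y) \<le> B * (p+q)" using True by simp
  ultimately show ?thesis by (rule add_mono)
next
  case False
  define d where "d = x + y - (p + q)"
  have d: "x + y = p + q + d" using False by (simp add: d_def)
  define e where "e = p - x"
  have e: "p = x + e" using assms(1) by (simp add: e_def inv_def)
  have de: "2*d \<le> e" using assms(1) d e unfolding inv_def by simp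
  have "B * d \<le> (2*A) * d" using assms(2) by simp
  also have "\<dots> = A * (2*d)" by simp
  also have "\<dots> \<le> A * e" using de by simp
  finally have "B*d \<le> A*e" .
  then show ?thesis unfolding d e by (simp add: algebra_simps)
qed

lemma dev:
  assumes "inv x y p q" "length u = 2*n+1" "bin_val u < bin_val (alt n @ [False])"
  shows "snd (run u (x,y)) \<le> snd (run (False # alt n) (p,q))"
  using assms
proof (induction n arbitrary: x y p q u)
  case 0
  then show ?case by (simp add: alt_0 bin_val_def)
next
  case (Suc n)
  obtain b u1 where u: "u = b # u1" using Suc.prems(2) by (cases u) auto
  have lu1: "length u1 = 2*n+2" using Suc.prems(2) u by simp
  have tv: "bin_val (alt (Suc n) @ [False]) = 2^(2*n+2) + bin_val (alt n @ [False])"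
    by (simp add: alt_Suc bin_val_Cons)
  show ?case
  proof (cases b)
    case False
    have h: "snd (run u (x,y)) \<le> fib (2*n+2) * x + fib (2*n+3) * (x+y)"
      using run_bound[of u1 x "x+y"] False u lu1 by (simp add: numeral_3_eq_3)
    have rhs: "snd (run (False # alt (Suc n)) (p,q)) = fib (2*n+2) * p + fib (2*n+3) * (p+q)"
      using alt_run[of "Suc n" p "p+q"] by (simp add: numeral_3_eq_3)
    have fb: "fib (2*n+3) \<le> 2 * fib (2*n+2)"
    proof -
      have "fib (2*n+3) = fib (2*n+2) + fib (2*n+1)"
        by (simp add: numeral_3_eq_3 numeral_2_eq_2)
      moreover have "fib (2*n+1) \<le> fib (2*n+2)" using fib_Suc_mono[of "2*n+1"] by simp
      ultimately show ?thesis by simp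
    qed
    show ?thesis using h rhs key_ineq[OF Suc.prems(1) fb] by simp
  next
    case True
    obtain b2 t where u1: "u1 = b2 # t" using lu1 by (cases u1) auto
    have lt: "length t = 2*n+1" using lu1 u1 by simp
    have "bin_val u1 < bin_val (alt n @ [False])"
      using Suc.prems(3) True u tv lu1 by (simp add: bin_val_Cons)
    moreover have "bin_val (alt n @ [False]) < 2^(2*n+1)"
      using bin_val_less[of "alt n @ [False]"] by simp
    ultimately have b2: "\<not> b2" and tv2: "bin_val t < bin_val (alt n @ [False])"
      using u1 lt by (auto simp: bin_val_Cons split: if_splits)
    have "snd (run u (x,y)) = snd (run t (x+y, x+2*y))"
      using True u u1 b2 by (simp add: mult_2 add.assoc)
    also have "\<dots> \<le> snd (run (False # alt n) (2*p+q, p+q))"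
      using Suc.IH[OF inv_step[OF Suc.prems(1)] lt tv2] .
    also have "\<dots> = snd (run (False # alt (Suc n)) (p,q))"
    proof -
      have "stp (stp (stp (p,q) False) True) False = stp (2*p+q, p+q) False"
        by (simp add: algebra_simps)
      then show ?thesis by (simp only: run_Cons alt_Suc)
    qed
    finally show ?thesis .
  qed
qed


lemma p24: "(2::nat)^(2*n+4) = 8 * 2^(2*n+1)"
  by (simp only: power_add) simp

abbreviation W :: "nat \<Rightarrow> nat" where
  "W n \<equiv> bin_val ([True, False, False, False] @ alt n @ [False])"

lemma W_val: "W n = 8 * 2^(2*n+1) + bin_val (alt n @ [False])"
proof -
  have "W n = 2^(length ([False, False, False] @ alt n @ [False])) + bin_val (alt n @ [False])"
    by (simp only: append_Cons append_Nil bin_val_Cons) simp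
  moreover have "length ([False, False, False] @ alt n @ [False]) = 2*n+4" by simp
  ultimately show ?thesis using p24[of n] by simp
qed

lemma W_less: "W n < 8 * 2^(2*n+1) + 2^(2*n+1)"
  using W_val[of n] bin_val_less[of "alt n @ [False]"] by simp

lemma fib5: "fib (2*n+5) = 5 * fib (2*n+1) + 3 * fib (2*n)"
proof -
  define m where "m = 2*n"
  have a: "fib (Suc (Suc m)) = fib (Suc m) + fib m" by (rule fib.simps(3))
  have b: "fib (Suc (Suc (Suc m))) = fib (Suc (Suc m)) + fib (Suc m)" by (rule fib.simps(3))
  have c: "fib (Suc (Suc (Suc (Suc m)))) = fib (Suc (Suc (Suc m))) + fib (Suc (Suc m))" by (rule fib.simps(3))
  have d: "fib (Suc (Suc (Suc (Suc (Suc m))))) = fib (Suc (Suc (Suc (Suc m)))) + fib (Suc (Suc (Suc m)))" by (rule fib.simps(3))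
  have e1: "fib (m+5) = fib (Suc (Suc (Suc (Suc (Suc m)))))" by (rule arg_cong[where f=fib]) simp
  have e2: "fib (m+1) = fib (Suc m)" by simp
  show ?thesis unfolding m_def[symmetric] e1 e2 using a b c d by linarith
qed

lemma s_W: "s (W n) = 5 * fib (2*n+1) + 4 * fib (2*n)"
proof -
  have "s (W n) = snd (run ([False, False, False] @ alt n @ [False]) (1,1))"
    using s_run[of "[False, False, False] @ alt n @ [False]"] by simp
  also have "\<dots> = snd (run (alt n @ [False]) (1,4))" by (simp add: numeral_eq_Suc)
  also have "\<dots> = fst (run (alt n) (1,4)) + snd (run (alt n) (1,4))"
    by (simp add: run_append stp_def)
  finally show ?thesis using alt_run[of n 1 4] by simp
qed

lemma s_pre: "s (bin_val (True # False # False # False # u)) = snd (run u (1,4))"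
  using s_run[of "False # False # False # u"] by (simp add: numeral_eq_Suc)

lemma bv_pre: "bin_val (True # False # False # False # u) = 8 * 2^(length u) + bin_val u"
  by (simp add: bin_val_Cons)

lemma small:
  assumes "i < 2^(2*n+4)"
  shows "s i \<le> fib (2*n+5)"
proof (cases "i = 0")
  case True
  have "s 0 = 1" by (simp add: s_def)
  moreover have "fib (2*n+5) > 0" by (rule fib_neq_0_nat) simp
  ultimately show ?thesis using True by simp
next
  case False
  then obtain r where r: "i = bin_val (True # r)" using binrep_form by blast
  have "2^length r \<le> i" using r by (simp add: bin_val_Cons)
  then have "(2::nat)^length r < 2^(2*n+4)" using assms by linarith
  then have lr: "length r \<le> 2*n+3" using power_strict_increasing_iff[of 2 "length r" "2*n+4"] by simp
  have "s i \<le> fib (length r) * 1 + fib (Suc (length r)) * 1"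
    using run_bound[of r 1 1] s_run[of r] r by simp
  also have "\<dots> = fib (length r + 2)" using fib_plus_2[of "length r"] by simp
  also have "\<dots> \<le> fib (2*n+5)" using lr by (intro fib_mono) simp
  finally show ?thesis .
qed

lemma i0_props: "bin_val (True # False # True # False # alt n) < 2^(2*n+4)
   \<and> s (bin_val (True # False # True # False # alt n)) = snd (run (False # alt n) (3,2))"
proof
  have "bin_val (True # False # True # False # alt n) < 2^(length (True # False # True # False # alt n))"
    by (rule bin_val_less)
  then show "bin_val (True # False # True # False # alt n) < 2^(2*n+4)" by (simp add: power_add)
  show "s (bin_val (True # False # True # False # alt n)) = snd (run (False # alt n) (3,2))"
    using s_run[of "False # True # False # alt n"] by (simp add: numeral_eq_Suc)
qed

lemma pre_bounds:
  assumes "length u = 2*n+1" "v = bin_val (True # False # False # False # u)"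
  shows "s v \<le> s (W n)"
    and "v < W n \<Longrightarrow> \<exists>i<v. s v \<le> s i \<and> s i \<le> fib (2*n+5)"
proof -
  have sv: "s v = snd (run u (1,4))" using assms s_pre by simp
  have "s v \<le> fib (2*n+1) * 1 + fib (Suc (2*n+1)) * 4"
    using run_bound[of u 1 4] sv assms(1) by simp
  moreover have "fib (Suc (2*n+1)) = fib (2*n+1) + fib (2*n)"
    using fib_plus_2[of "2*n"] by simp
  ultimately show "s v \<le> s (W n)" using s_W[of n] by simp
  assume vw: "v < W n"
  have "bin_val u < bin_val (alt n @ [False])"
    using vw W_val[of n] assms bv_pre by simp
  then have "snd (run u (1,4)) \<le> snd (run (False # alt n) (3,2))"
    using dev[of 1 4 3 2 u n] assms(1) by (simp add: inv_def)
  moreover have "bin_val (True # False # True # False # alt n) < v"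
  proof -
    have "(2::nat)^(2*n+4) = 8 * 2^(length u)" using assms(1) p24 by simp
    then show ?thesis using i0_props[of n] assms(2) bv_pre[of u] by linarith
  qed
  ultimately show "\<exists>i<v. s v \<le> s i \<and> s i \<le> fib (2*n+5)"
    using i0_props[of n] small[of "bin_val (True # False # True # False # alt n)" n] sv
    by (intro exI[of _ "bin_val (True # False # True # False # alt n)"]) simp
qed


lemma prefix_form:
  assumes "2^(2*n+4) \<le> i" "i < W n"
  shows "\<exists>u. length u = 2*n+1 \<and> i = bin_val (True # False # False # False # u)"
proof -
  define P :: nat where "P = 2^(2*n+1)"
  have P4: "(2::nat)^(2*n+4) = 8*P" using p24 by (simp add: P_def)
  have P5: "(2::nat)^(2*n+5) = 16*P" unfolding P_def by (simp only: power_add) simp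
  have P3: "(2::nat)^(2*n+3) = 4*P" unfolding P_def by (simp only: power_add) simp
  have P2: "(2::nat)^(2*n+2) = 2*P" unfolding P_def by (simp only: power_add) simp
  have wl: "W n < 9 * P" using W_less[of n] by (simp add: P_def)
  have "i > 0" using assms(1) by (metis less_le_trans pos2 zero_less_power)
  then obtain r where r: "i = bin_val (True # r)" using binrep_form by blast
  have ir: "i = 2^length r + bin_val r" using r by (simp add: bin_val_Cons)
  have lr: "length r = 2*n+4"
  proof (rule ccontr)
    assume "length r \<noteq> 2*n+4"
    then consider "length r \<ge> 2*n+5" | "length r \<le> 2*n+3" by linarith
    then show False
    proof cases
      case 1
      then have "(2::nat)^(2*n+5) \<le> 2^length r" by (intro power_increasing) auto
      then show False using ir assms(2) wl P5 by linarith
    next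
      case 2
      then have "(2::nat)^(length r + 1) \<le> 2^(2*n+4)" by (intro power_increasing) auto
      moreover have "i < 2^(length r + 1)" using ir bin_val_less[of r] by simp
      ultimately show False using assms(1) by linarith
    qed
  qed
  obtain b1 r1 where r1: "r = b1 # r1" using lr by (cases r) auto
  obtain b2 r2 where r2: "r1 = b2 # r2" using lr r1 by (cases r1) auto
  obtain b3 u where r3: "r2 = b3 # u" using lr r1 r2 by (cases r2) auto
  have r': "r = b1 # b2 # b3 # u" using r1 r2 r3 by simp
  have lu: "length u = 2*n+1" using lr r' by simp
  have iv: "i = 8*P + (if b1 then 4*P else 0) + (if b2 then 2*P else 0) + (if b3 then P else 0) + bin_val u"
    using ir r' lu P4 P3 P2 by (simp add: bin_val_Cons P_def)
  have "\<not> b1 \<and> \<not> b2 \<and> \<not> b3" using iv assms(2) wl by (auto split: if_splits)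
  then show ?thesis using iv lu by (intro exI[of _ u]) (simp add: bv_pre P_def)
qed


theorem mainTheorem16:
  fixes n :: nat
  assumes "n \<ge> 1"
  defines "w \<equiv> bin_val ([True, False, False, False] @ str_pow [True, False] n @ [False])"
  shows "{v \<in> R. length (binrep v) = 2 * n + 5 \<and>
            take 4 (binrep v) = [True, False, False, False]} = {w}
       \<and> w \<in> R \<and> length (binrep w) = 2 * n + 5
       \<and> (\<forall>v \<in> R. length (binrep v) = 2 * n + 5 \<longrightarrow> w \<le> v)"
proof -
  have wW: "w = W n" by (simp add: w_def)
  have n1: "fib (2*n) \<ge> 1" using fib_neq_0_nat[of "2*n"] assms(1) by simp
  have sW: "s w > fib (2*n+5)" using s_W[of n] fib5[of n] n1 wW by simp
  have bw: "binrep w = True # ([False, False, False] @ alt n @ [False])"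
    using binrep_bin_val[of "[False, False, False] @ alt n @ [False]"] by (simp add: w_def)
  have lw: "length (binrep w) = 2*n+5" using bw by simp
  have tw: "take 4 (binrep w) = [True, False, False, False]" using bw by (simp add: numeral_eq_Suc)
  have notR: "v = w" if h1: "length u = 2*n+1" and h2: "v = bin_val (True # False # False # False # u)" and h3: "v \<in> R" for u v
  proof (rule ccontr)
    assume "v \<noteq> w"
    then consider "v < w" | "w < v" by linarith
    then show False
    proof cases
      case 1
      then obtain i where "i < v" "s v \<le> s i" using pre_bounds(2)[OF h1 h2] wW by blast
      then show False using h3 by (auto simp: R_def)
    next
      case 2
      then have "s w < s v" using h3 by (auto simp: R_def)
      then show False using pre_bounds(1)[OF h1 h2] wW by simp
    qed
  qed
  have wR: "w \<in> R"
    unfolding R_def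
  proof (intro CollectI allI impI)
    fix i assume iw: "i < w"
    show "s i < s w"
    proof (cases "i < 2^(2*n+4)")
      case True
      then show ?thesis using small[of i n] sW by simp
    next
      case False
      then obtain u where "length u = 2*n+1" "i = bin_val (True # False # False # False # u)"
        using prefix_form[of n i] iw wW by auto
      then obtain j where "s i \<le> s j" "s j \<le> fib (2*n+5)"
        using pre_bounds(2)[of u n i] iw wW by blast
      then show ?thesis using sW by simp
    qed
  qed
  have big: "v \<ge> 2^(2*n+4)" if "length (binrep v) = 2*n+5" for v
  proof -
    have "v \<noteq> 0" using that by (auto simp: binrep_def split: if_splits)
    then obtain r where r: "binrep v = True # r" "v = bin_val (True # r)"
      using binrep_form by blast
    have "length r = 2*n+4" using r that by simp
    then show ?thesis using r by (simp add: bin_val_Cons)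
  qed
  have minimal: "\<forall>v \<in> R. length (binrep v) = 2 * n + 5 \<longrightarrow> w \<le> v"
  proof (intro ballI impI)
    fix v assume vR: "v \<in> R" and lv: "length (binrep v) = 2*n+5"
    show "w \<le> v"
    proof (rule ccontr)
      assume "\<not> w \<le> v"
      then have vw: "v < w" by simp
      obtain u where "length u = 2*n+1" "v = bin_val (True # False # False # False # u)"
        using prefix_form[of n v] big[OF lv] vw wW by auto
      then have "v = w" using notR vR by blast
      then show False using vw by simp
    qed
  qed
  have seteq: "{v \<in> R. length (binrep v) = 2 * n + 5 \<and>
            take 4 (binrep v) = [True, False, False, False]} = {w}"
  proof
    show "{w} \<subseteq> {v \<in> R. length (binrep v) = 2 * n + 5 \<and>
            take 4 (binrep v) = [True, False, False, False]}" using wR lw tw by simp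
  next
    show "{v \<in> R. length (binrep v) = 2 * n + 5 \<and>
            take 4 (binrep v) = [True, False, False, False]} \<subseteq> {w}"
    proof
      fix v assume "v \<in> {v \<in> R. length (binrep v) = 2 * n + 5 \<and>
            take 4 (binrep v) = [True, False, False, False]}"
      then have vR: "v \<in> R" and lv: "length (binrep v) = 2*n+5"
        and tv: "take 4 (binrep v) = [True, False, False, False]" by auto
      have "v \<noteq> 0" using lv by (auto simp: binrep_def split: if_splits)
      then obtain r where r: "binrep v = True # r" "v = bin_val (True # r)"
        using binrep_form by blast
      have lr: "length r = 2*n+4" using r lv by simp
      obtain b1 r1 where r1: "r = b1 # r1" using lr by (cases r) auto
      obtain b2 r2 where r2: "r1 = b2 # r2" using lr r1 by (cases r1) auto
      obtain b3 u where r3: "r2 = b3 # u" using lr r1 r2 by (cases r2) auto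
      have "r = False # False # False # u" using tv r r1 r2 r3 by (simp add: numeral_eq_Suc)
      moreover have "length u = 2*n+1" using lr r1 r2 r3 by simp
      ultimately have "v = w" using notR[of u v] r vR by simp
      then show "v \<in> {w}" by simp
    qed
  qed
  show ?thesis using seteq wR lw minimal by blast
qed

end
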